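(* Let $(B,\tau)$ be a topological space. Let $G(B,\tau)=(R,A,B,p,\partial)$ be the fibrous preorder with $$A=\{(U,x)\mid x\in U\in\tau\},\qquad p(U,x)=x,\qquad (U,x)Ry\iff y\in U,\qquad \partial((U,x),y)=(U,y).$$ Then $(B,\tau)$ is an Alexandrov space (i.e. every intersection of open sets is open) if and only if $G(B,\tau)$ is equivalent to a fibrous preorder of the form $(\le,B,B,1_B,\partial_\le)$ for some preorder $\le$ on $B$. Here $x\mathrel{R}y\iff x\le y$ and $\partial_\le(x,y)=y$.
   Context: A fibrous preorder is a sequence $R\xrightarrow{\partial}A\xrightarrow{p}B$ consisting of the following data: - sets $A$ and $B$; - a map $p\colon A\to B$; - a relation $R\subseteq A\times B$ (write $aRb$ for $(a,b)\in R$); - a map $\partial\colon R\to A$. These must satisfy, for all $a\in A$ and $b,y\in B$ with $aRb$: - (F1) $p\partial(a,b)=b$; - (F2) $aRp(a)$ (this holds for all $a\in A$); - (F3) $\partial(a,b)Ry\Rightarrow aRy$. Two fibrous preorders $(R,A,B,p,\partial)$ and $(R',A',B',p',\partial')$ are equivalent if $B=B'$ and there exist maps $\varphi\colon A\to A'$ and $\gamma\colon A'\to A$ with $p'\varphi=p$ and $p\gamma=p'$ such that, for all $a\in A$, $a'\in A'$ and $b\in B$, $\varphi(a)R'b\Rightarrow aRb$ and $\gamma(a')Rb\Rightarrow a'R'b$. *)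

theory Defs
  imports "HOL-Analysis.Analysis"
begin

text \<open>A fibrous preorder R --d--> A --p--> B. The relation R is a set of pairs,
  the map d is defined on R (values outside R are irrelevant).\<close>
definition fibrous_preorder ::
  "('a \<times> 'b) set \<Rightarrow> 'a set \<Rightarrow> 'b set \<Rightarrow> ('a \<Rightarrow> 'b) \<Rightarrow> ('a \<times> 'b \<Rightarrow> 'a) \<Rightarrow> bool" where
  "fibrous_preorder R A B p d \<longleftrightarrow>
     p ` A \<subseteq> B \<and> R \<subseteq> A \<times> B \<and> d ` R \<subseteq> A \<and>
     (\<forall>a b. (a, b) \<in> R \<longrightarrow> p (d (a, b)) = b) \<and>
     (\<forall>a\<in>A. (a, p a) \<in> R) \<and>
     (\<forall>a b y. (a, b) \<in> R \<longrightarrow> y \<in> B \<longrightarrow> (d (a, b), y) \<in> R \<longrightarrow> (a, y) \<in> R)"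

definition fibrous_equivalent ::
  "('a \<times> 'b) set \<Rightarrow> 'a set \<Rightarrow> 'b set \<Rightarrow> ('a \<Rightarrow> 'b) \<Rightarrow> ('a \<times> 'b \<Rightarrow> 'a) \<Rightarrow>
   ('c \<times> 'b) set \<Rightarrow> 'c set \<Rightarrow> 'b set \<Rightarrow> ('c \<Rightarrow> 'b) \<Rightarrow> ('c \<times> 'b \<Rightarrow> 'c) \<Rightarrow> bool" where
  "fibrous_equivalent R A B p d R' A' B' p' d' \<longleftrightarrow>
     B = B' \<and>
     (\<exists>\<phi> \<gamma>. \<phi> ` A \<subseteq> A' \<and> \<gamma> ` A' \<subseteq> A \<and>
        (\<forall>a\<in>A. p' (\<phi> a) = p a) \<and> (\<forall>a'\<in>A'. p (\<gamma> a') = p' a') \<and>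
        (\<forall>a\<in>A. \<forall>b\<in>B. (\<phi> a, b) \<in> R' \<longrightarrow> (a, b) \<in> R) \<and>
        (\<forall>a'\<in>A'. \<forall>b\<in>B. (\<gamma> a', b) \<in> R \<longrightarrow> (a', b) \<in> R'))"

definition G_A :: "'b topology \<Rightarrow> ('b set \<times> 'b) set" where
  "G_A T = {(U, x). openin T U \<and> x \<in> U}"

definition G_R :: "'b topology \<Rightarrow> (('b set \<times> 'b) \<times> 'b) set" where
  "G_R T = {((U, x), y). (U, x) \<in> G_A T \<and> y \<in> U}"

definition G_p :: "'b set \<times> 'b \<Rightarrow> 'b" where
  "G_p = snd"

definition G_d :: "('b set \<times> 'b) \<times> 'b \<Rightarrow> 'b set \<times> 'b" where
  "G_d = (\<lambda>((U, x), y). (U, y))"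

text \<open>Alexandrov space: every intersection of (a nonempty family of) open sets is open;
  the empty intersection is the whole space, which is open anyway.\<close>
definition alexandrov_space :: "'b topology \<Rightarrow> bool" where
  "alexandrov_space T \<longleftrightarrow> (\<forall>F. F \<noteq> {} \<and> (\<forall>U\<in>F. openin T U) \<longrightarrow> openin T (\<Inter>F))"

end

theory Submission
  imports Defs
begin

theorem mainTheorem6:
  fixes T :: "'b topology"
  shows "alexandrov_space T \<longleftrightarrow>
    (\<exists>le. preorder_on (topspace T) le \<and>
       fibrous_equivalent (G_R T) (G_A T) (topspace T) G_p G_d
         le (topspace T) (topspace T) id (\<lambda>(x, y). y))"
proof
  assume alex: "alexandrov_space T"
  define N where "N x = \<Inter>{U. openin T U \<and> x \<in> U}" for x
  have Nopen: "openin T (N x)" if "x \<in> topspace T" for x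
    using alex that unfolding alexandrov_space_def N_def
    by (metis (mono_tags, lifting) empty_Collect_eq mem_Collect_eq openin_topspace)
  have Nx: "x \<in> N x" for x unfolding N_def by blast
  have Nsub: "N x \<subseteq> U" if "openin T U" "x \<in> U" for x U
    using that unfolding N_def by blast
  define le where "le = {(x,y). x \<in> topspace T \<and> y \<in> topspace T \<and> y \<in> N x}"
  have pre: "preorder_on (topspace T) le"
    unfolding preorder_on_def refl_on_def trans_def le_def
    using Nx Nsub Nopen by blast
  have eq: "fibrous_equivalent (G_R T) (G_A T) (topspace T) G_p G_d
         le (topspace T) (topspace T) id (\<lambda>(x, y). y)"
    unfolding fibrous_equivalent_def
  proof (intro conjI refl exI[of _ snd] exI[of _ "\<lambda>x. (N x, x)"])
    show "snd ` G_A T \<subseteq> topspace T"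
      unfolding G_A_def using openin_subset by fastforce
    show "(\<lambda>x. (N x, x)) ` topspace T \<subseteq> G_A T"
      unfolding G_A_def using Nopen Nx by auto
    show "\<forall>a\<in>G_A T. id (snd a) = G_p a" by (simp add: G_p_def)
    show "\<forall>a'\<in>topspace T. G_p (N a', a') = id a'" by (simp add: G_p_def)
    show "\<forall>a\<in>G_A T. \<forall>b\<in>topspace T. (snd a, b) \<in> le \<longrightarrow> (a, b) \<in> G_R T"
      unfolding G_A_def G_R_def le_def using Nsub by auto
    show "\<forall>a'\<in>topspace T. \<forall>b\<in>topspace T. ((N a', a'), b) \<in> G_R T \<longrightarrow> (a', b) \<in> le"
      unfolding G_R_def le_def by auto
  qed
  show "\<exists>le. preorder_on (topspace T) le \<and>
       fibrous_equivalent (G_R T) (G_A T) (topspace T) G_p G_d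
         le (topspace T) (topspace T) id (\<lambda>(x, y). y)"
    using pre eq by blast
next
  assume "\<exists>le. preorder_on (topspace T) le \<and>
       fibrous_equivalent (G_R T) (G_A T) (topspace T) G_p G_d
         le (topspace T) (topspace T) id (\<lambda>(x, y). y)"
  then obtain le \<phi> \<gamma> where
    phiA: "\<phi> ` G_A T \<subseteq> topspace T" and gamA: "\<gamma> ` topspace T \<subseteq> G_A T"
    and phip: "\<forall>a\<in>G_A T. \<phi> a = G_p a" and gamp: "\<forall>a'\<in>topspace T. G_p (\<gamma> a') = a'"
    and phiR: "\<forall>a\<in>G_A T. \<forall>b\<in>topspace T. (\<phi> a, b) \<in> le \<longrightarrow> (a, b) \<in> G_R T"
    and gamR: "\<forall>a'\<in>topspace T. \<forall>b\<in>topspace T. (\<gamma> a', b) \<in> G_R T \<longrightarrow> (a', b) \<in> le"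
    unfolding fibrous_equivalent_def by auto
  show "alexandrov_space T"
    unfolding alexandrov_space_def
  proof (intro allI impI)
    fix F assume F: "F \<noteq> {} \<and> (\<forall>U\<in>F. openin T U)"
    show "openin T (\<Inter>F)"
    proof (subst openin_subopen, intro ballI)
      fix x assume x: "x \<in> \<Inter>F"
      have xT: "x \<in> topspace T" using F x openin_subset by blast
      obtain V x' where gx: "\<gamma> x = (V, x')" by fastforce
      have VA: "(V, x') \<in> G_A T" using gamA xT gx by force
      have "x' = x" using gamp xT gx by (metis G_p_def snd_conv)
      hence Vo: "openin T V" and xV: "x \<in> V" using VA by (auto simp: G_A_def)
      have "V \<subseteq> \<Inter>F"
      proof
        fix y assume yV: "y \<in> V"
        have yT: "y \<in> topspace T" using Vo yV openin_subset by blast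
        have le1: "(x, y) \<in> le"
          using gamR xT yT gx VA yV by (auto simp: G_R_def)
        show "y \<in> \<Inter>F"
        proof
          fix U assume U: "U \<in> F"
          have aA: "(U, x) \<in> G_A T" using F U x by (auto simp: G_A_def)
          have "\<phi> (U, x) = x" using phip aA by (simp add: G_p_def)
          hence "((U, x), y) \<in> G_R T" using phiR aA yT le1 by metis
          thus "y \<in> U" by (simp add: G_R_def)
        qed
      qed
      thus "\<exists>T'. openin T T' \<and> x \<in> T' \<and> T' \<subseteq> \<Inter>F" using Vo xV by blast
    qed
  qed
qed

end
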